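(* Let $a=(a_1<\dots<a_n)$ be the sequence of a matching of size $n$ and $d(a)=\sum_i(a_i-i)$. For an indeterminate $t$, let $\Phi_a(\tau,t)$ be the coefficient of $\prod_{i=1}^n u_i^{a_i-1}$ in the formal power series $$\prod_{i=1}^n(1+\tau u_i)^t\prod_{1\le i<j\le n}(u_j-u_i)(1+\tau u_j+u_iu_j),$$ where $(1+\tau u)^t=\sum_{k\ge0}\binom{t}{k}\tau^ku^k$. Then $\Phi_a(\tau,t)$ is a polynomial in $\tau$ with coefficients in $\mathbb{Q}[t]$, of degree $d(a)$ in $\tau$, whose coefficient of $\tau^{d(a)}$ is $$D_a(t)=\det_{1\le i,j\le n}\left[\binom{t+i-1}{a_i-j}\right].$$
   Context: A matching of size $n$ is a set of $n$ disjoint noncrossing pairs partitioning $\{1,\dots,2n\}$; its sequence $a_1<\dots<a_n$ lists the smaller elements of its arches (so $a_i\le 2i-1$). $\binom{x}{k}=x(x-1)\cdots(x-k+1)/k!$ for $k\ge0$ and $0$ for $k<0$. *)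

theory Defs
  imports "HOL-Library.Poly_Mapping" "HOL-Computational_Algebra.Polynomial"
    "Jordan_Normal_Form.Determinant"
begin

definition noncrossing_matching :: "nat \<Rightarrow> (nat \<times> nat) set \<Rightarrow> bool" where
  "noncrossing_matching n M \<longleftrightarrow>
     (\<forall>p\<in>M. fst p < snd p \<and> fst p \<in> {1..2*n} \<and> snd p \<in> {1..2*n}) \<and>
     (\<forall>x\<in>{1..2*n}. \<exists>!p. p \<in> M \<and> (x = fst p \<or> x = snd p)) \<and>
     \<not> (\<exists>p\<in>M. \<exists>q\<in>M. fst p < fst q \<and> fst q < snd p \<and> snd p < snd q)"

(* the sequence a_1 < ... < a_n of smaller elements; a_(i+1) = matching_seq M ! i *)
definition matching_seq :: "(nat \<times> nat) set \<Rightarrow> nat list" where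
  "matching_seq M = sorted_list_of_set (fst ` M)"

definition pbinom :: "rat poly \<Rightarrow> nat \<Rightarrow> rat poly" where
  "pbinom p k = smult (1 / fact k) (\<Prod>m<k. p - [:of_nat m:])"

definition tbinom :: "nat \<Rightarrow> int \<Rightarrow> rat poly" where
  "tbinom s k = (if k < 0 then 0 else pbinom [:of_nat s, 1:] (nat k))"

(* the indeterminate t and tau: Phi lives in (Q[t])[tau] = rat poly poly *)
definition tau :: "rat poly poly" where "tau = [:0, 1:]"

(* multivariate polynomials in u_0, u_1, ... with coefficients in Q[t][tau] *)
type_synonym upoly = "(nat \<Rightarrow>\<^sub>0 nat) \<Rightarrow>\<^sub>0 rat poly poly"

definition uvar :: "nat \<Rightarrow> upoly" where
  "uvar i = Poly_Mapping.single (Poly_Mapping.single i 1) 1"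

definition uconst :: "rat poly poly \<Rightarrow> upoly" where
  "uconst c = Poly_Mapping.single 0 c"

definition Qpoly :: "nat \<Rightarrow> upoly" where
  "Qpoly n = (\<Prod>(i,j)\<in>{(i,j). i < j \<and> j < n}.
      (uvar j - uvar i) * (1 + uconst tau * uvar j + uvar i * uvar j))"

(* coefficient of u^m in the series (1 + tau u)^t, i.e. binom(t,m) tau^m *)
definition ser_coeff :: "nat \<Rightarrow> rat poly poly" where
  "ser_coeff m = [:pbinom [:0, 1:] m:] * tau ^ m"

(* Phi_a(tau,t): coefficient of prod_i u_i^(a_i - 1) in
   prod_i (1+tau u_i)^t * Qpoly n, computed as the (finite) Cauchy product:
   sum over monomials u^e of Qpoly with coefficient q_e, times the coefficient
   of u_i^(a_i-1-e_i) in (1+tau u_i)^t (zero if e_i > a_i - 1), with e_i = 0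
   required for i >= n (target exponent 0). *)
definition Phi :: "nat list \<Rightarrow> rat poly poly" where
  "Phi a = (let n = length a in
     \<Sum>e\<in>Poly_Mapping.keys (Qpoly n).
        (if (\<forall>i\<ge>n. Poly_Mapping.lookup e i = 0) then
           Poly_Mapping.lookup (Qpoly n) e *
           (\<Prod>i<n. if Poly_Mapping.lookup e i \<le> a ! i - 1
                     then ser_coeff (a ! i - 1 - Poly_Mapping.lookup e i) else 0)
         else 0))"

definition dstat :: "nat list \<Rightarrow> nat" where
  "dstat a = (\<Sum>i<length a. a ! i - (i + 1))"

(* D_a(t) = det [binom(t+i-1, a_i - j)]_{1<=i,j<=n}; 0-based: binom(t+i, a!i - j - 1) *)
definition Dmat :: "nat list \<Rightarrow> rat poly mat" where
  "Dmat a = mat (length a) (length a)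
     (\<lambda>(i,j). tbinom i (int (a ! i) - int j - 1))"

end

theory Submission
  imports Defs "HOL-Computational_Algebra.Formal_Power_Series"
begin


lemma det_rows_scale:
  fixes c :: "nat \<Rightarrow> 'a::comm_ring_1"
  shows "det (mat n n (\<lambda>(i,j). c i * f i j)) = (\<Prod>i<n. c i) * det (mat n n (\<lambda>(i,j). f i j))"
proof -
  have "det (mat n n (\<lambda>(i,j). c i * f i j)) = (\<Sum>p\<in>{p. p permutes {0..<n}}. signof p * (\<Prod>i=0..<n. c i * f i (p i)))"
    by (subst det_def'[of _ n]) (auto intro!: sum.cong prod.cong simp: permutes_def)
  also have "\<dots> = (\<Sum>p\<in>{p. p permutes {0..<n}}. (\<Prod>i<n. c i) * (signof p * (\<Prod>i=0..<n. f i (p i))))"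
    by (intro sum.cong refl) (simp add: prod.distrib atLeast0LessThan ac_simps)
  also have "\<dots> = (\<Prod>i<n. c i) * det (mat n n (\<lambda>(i,j). f i j))"
    by (subst det_def'[of _ n]) (auto simp: sum_distrib_left intro!: sum.cong prod.cong arg_cong[where f="(*) _"] simp: permutes_def)
  finally show ?thesis .
qed

lemma vandermonde_det:
  fixes x :: "nat \<Rightarrow> 'a::comm_ring_1"
  shows "det (mat n n (\<lambda>(i,j). x i ^ j)) = (\<Prod>j<n. \<Prod>i<j. (x j - x i))"
proof (induction n arbitrary: x)
  case 0
  then show ?case by (simp add: det_dim_zero)
next
  case (Suc n)
  define A where "A = mat (Suc n) (Suc n) (\<lambda>(i,j). x i ^ j)"
  define E :: "'a mat" where "E = mat (Suc n) (Suc n) (\<lambda>(k,j). if k = j then 1 else if Suc k = j then - x 0 else 0)"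
  have A: "A \<in> carrier_mat (Suc n) (Suc n)" and E: "E \<in> carrier_mat (Suc n) (Suc n)"
    unfolding A_def E_def by auto
  have detE: "det E = 1"
  proof -
    have "upper_triangular E" unfolding E_def upper_triangular_def by auto
    then have "det E = prod_list (diag_mat E)" using det_upper_triangular E by blast
    also have "\<dots> = 1" unfolding prod_list_diag_prod by (simp add: E_def)
    finally show ?thesis .
  qed
  define B where "B = A * E"
  have B: "B \<in> carrier_mat (Suc n) (Suc n)" unfolding B_def using A E by auto
  have Bij: "B $$ (i,j) = (if j = 0 then 1 else (x i - x 0) * x i ^ (j - 1))"
    if "i < Suc n" "j < Suc n" for i j
  proof -
    have "B $$ (i,j) = (\<Sum>k\<in>{0..<Suc n}. x i ^ k * E $$ (k,j))"
      using that A E unfolding B_def by (simp add: scalar_prod_def A_def)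
    also have "\<dots> = (\<Sum>k\<in>{0..<Suc n}. (if k = j then x i ^ k else 0) + (if Suc k = j then - x 0 * x i ^ k else 0))"
      by (intro sum.cong refl) (auto simp: E_def that)
    also have "\<dots> = (if j = 0 then 1 else (x i - x 0) * x i ^ (j - 1))"
    proof (cases j)
      case 0 then show ?thesis using that by (simp add: sum.distrib)
    next
      case (Suc j')
      have "(\<Sum>k\<in>{0..<Suc n}. (if Suc k = j then - x 0 * x i ^ k else 0)) = - x 0 * x i ^ j'"
        using that Suc by (simp add: sum.delta)
      then show ?thesis using that Suc by (simp add: sum.distrib algebra_simps) (metis Suc_lessI power_Suc)
    qed
    finally show ?thesis .
  qed
  have "det A = det B" unfolding B_def using det_mult[OF A E] detE by simp
  also have "det B = (\<Sum>j<Suc n. B $$ (0,j) * cofactor B 0 j)"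
    by (rule laplace_expansion_row[OF B]) simp
  also have "\<dots> = (\<Sum>j<Suc n. if j = 0 then cofactor B 0 0 else 0)"
    by (intro sum.cong refl) (auto simp: Bij)
  also have "\<dots> = det (mat_delete B 0 0)" by (simp add: cofactor_def)
  also have "mat_delete B 0 0 = mat n n (\<lambda>(i,j). (x (Suc i) - x 0) * (x \<circ> Suc) i ^ j)"
    using B by (auto simp: mat_delete_def Bij)
  also have "det \<dots> = (\<Prod>i<n. x (Suc i) - x 0) * det (mat n n (\<lambda>(i,j). (x \<circ> Suc) i ^ j))"
    by (rule det_rows_scale)
  also have "\<dots> = (\<Prod>i<n. x (Suc i) - x 0) * (\<Prod>j<n. \<Prod>i<j. (x (Suc j) - x (Suc i)))"
    using Suc.IH[of "x \<circ> Suc"] by simp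
  also have "\<dots> = (\<Prod>j<Suc n. \<Prod>i<j. (x j - x i))"
    by (simp add: prod.lessThan_Suc_shift prod.distrib del: prod.lessThan_Suc)
  finally show ?case unfolding A_def .
qed



definition Lf :: "((nat \<Rightarrow>\<^sub>0 nat) \<Rightarrow> rat poly poly) \<Rightarrow> upoly \<Rightarrow> rat poly poly" where
  "Lf w p = (\<Sum>e\<in>Poly_Mapping.keys p. Poly_Mapping.lookup p e * w e)"

lemma Lf_superset:
  assumes "finite K" "Poly_Mapping.keys p \<subseteq> K"
  shows "Lf w p = (\<Sum>e\<in>K. Poly_Mapping.lookup p e * w e)"
  unfolding Lf_def using assms
  by (intro sum.mono_neutral_left) (auto simp: in_keys_iff)

lemma Lf_add: "Lf w (p + q) = Lf w p + Lf w q"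
proof -
  let ?K = "Poly_Mapping.keys p \<union> Poly_Mapping.keys q"
  have "Poly_Mapping.keys (p + q) \<subseteq> ?K" by (rule Poly_Mapping.keys_add)
  then have "Lf w (p + q) = (\<Sum>e\<in>?K. Poly_Mapping.lookup (p+q) e * w e)"
    by (intro Lf_superset) auto
  also have "\<dots> = (\<Sum>e\<in>?K. Poly_Mapping.lookup p e * w e) + (\<Sum>e\<in>?K. Poly_Mapping.lookup q e * w e)"
    by (simp add: lookup_add distrib_right sum.distrib)
  also have "\<dots> = Lf w p + Lf w q"
    by (subst (1 2) Lf_superset[of ?K]) auto
  finally show ?thesis .
qed

lemma Lf_zero: "Lf w 0 = 0" by (simp add: Lf_def)

lemma Lf_sum: "Lf w (\<Sum>x\<in>X. f x) = (\<Sum>x\<in>X. Lf w (f x))"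
  by (induction X rule: infinite_finite_induct) (auto simp: Lf_zero Lf_add)

lemma Lf_single: "Lf w (Poly_Mapping.single e c) = c * w e"
  by (simp add: Lf_def)

lemma Lf_scale: "Lf w (Poly_Mapping.single 0 c * p) = c * Lf w p"
proof -
  have lk: "Poly_Mapping.lookup (Poly_Mapping.single 0 c * p) e = c * Poly_Mapping.lookup p e" for e
    unfolding mult_map_scale_conv_mult[symmetric] by (simp add: map.rep_eq when_def)
  have "Poly_Mapping.keys (Poly_Mapping.single 0 c * p) \<subseteq> Poly_Mapping.keys p"
    by (auto simp: in_keys_iff lk)
  then have "Lf w (Poly_Mapping.single 0 c * p) = (\<Sum>e\<in>Poly_Mapping.keys p. Poly_Mapping.lookup (Poly_Mapping.single 0 c * p) e * w e)"
    by (intro Lf_superset) auto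
  also have "\<dots> = c * Lf w p" by (simp add: lk Lf_def sum_distrib_left mult.assoc)
  finally show ?thesis .
qed

lemma prod_single:
  fixes f :: "'i \<Rightarrow> 'k::comm_monoid_add" and c :: "'i \<Rightarrow> 'r::comm_semiring_1"
  shows "finite A \<Longrightarrow> (\<Prod>x\<in>A. Poly_Mapping.single (f x) (c x)) = Poly_Mapping.single (\<Sum>x\<in>A. f x) (\<Prod>x\<in>A. c x)"
  by (induction A rule: finite_induct) (auto simp: mult_single)

lemma expand_prod:
  fixes f :: "'i \<Rightarrow> 'j \<Rightarrow> 'k::comm_monoid_add" and c :: "'i \<Rightarrow> 'j \<Rightarrow> 'r::comm_semiring_1"
  assumes "finite A" "\<And>x. x \<in> A \<Longrightarrow> finite (B x)"
  shows "(\<Prod>x\<in>A. \<Sum>y\<in>B x. Poly_Mapping.single (f x y) (c x y))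
     = (\<Sum>g\<in>PiE A B. Poly_Mapping.single (\<Sum>x\<in>A. f x (g x)) (\<Prod>x\<in>A. c x (g x)))"
  by (simp add: prod_sum_PiE[OF assms] prod_single[OF assms(1)])

definition cf3 :: "nat \<times> nat \<Rightarrow> rat poly poly" where
  "cf3 c = (if fst c = 0 then 1 else -1) * (if snd c = 1 then tau else 1)"

definition ex3 :: "nat \<times> nat \<Rightarrow> nat \<times> nat \<Rightarrow> (nat \<Rightarrow>\<^sub>0 nat)" where
  "ex3 p c = (if fst c = 0 then Poly_Mapping.single (snd p) 1 else Poly_Mapping.single (fst p) 1)
     + (if snd c = 0 then 0 else if snd c = 1 then Poly_Mapping.single (snd p) 1
        else Poly_Mapping.single (fst p) 1 + Poly_Mapping.single (snd p) 1)"

definition C3 :: "(nat \<times> nat) set" where "C3 = {0,1} \<times> {0,1,2}"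

lemma factor_expand:
  "(uvar j - uvar i) * (1 + uconst tau * uvar j + uvar i * uvar j)
   = (\<Sum>c\<in>C3. Poly_Mapping.single (ex3 (i,j) c) (cf3 c))"
  unfolding C3_def
  by (simp add: uvar_def uconst_def ex3_def cf3_def algebra_simps mult_single single_uminus)



lemma poly_pbinom: "poly (pbinom p k) x = poly p x gchoose k"
  by (simp add: pbinom_def poly_prod gbinomial_prod_rev atLeast0LessThan field_simps)

lemma cv_pbinom:
  "(\<Sum>k\<le>i. of_nat (i choose k) * (if k \<le> L then pbinom [:0,1:] (L - k) else 0)) = pbinom [:of_nat i, 1:] L"
proof -
  have "poly (\<Sum>k\<le>i. of_nat (i choose k) * (if k \<le> L then pbinom [:0,1:] (L - k) else 0)) x
      = poly (pbinom [:of_nat i, 1:] L) x" for x :: rat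
  proof -
    define f where "f k = of_nat (i choose k) * (x gchoose (L - k))" for k
    have "poly (\<Sum>k\<le>i. of_nat (i choose k) * (if k \<le> L then pbinom [:0,1:] (L - k) else 0)) x
        = (\<Sum>k\<le>i. if k \<in> {..L} then f k else 0)"
      by (simp add: poly_sum f_def poly_pbinom of_nat_poly) (intro sum.cong refl, auto simp: poly_pbinom f_def)
    also have "\<dots> = (\<Sum>k\<in>{..i} \<inter> {..L}. f k)" by (simp only: sum.inter_restrict[symmetric] finite_atMost)
    also have "\<dots> = (\<Sum>k\<in>{0..L}. f k)"
      by (rule sum.mono_neutral_left) (auto simp: f_def)
    also have "\<dots> = (\<Sum>k\<in>{0..L}. (of_nat i gchoose k) * (x gchoose (L - k)))"
      by (simp add: f_def binomial_gbinomial)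
    also have "\<dots> = (of_nat i + x) gchoose L" by (rule gbinomial_Vandermonde)
    also have "\<dots> = poly (pbinom [:of_nat i, 1:] L) x" by (simp add: poly_pbinom)
    finally show ?thesis .
  qed
  then show ?thesis using poly_eq_poly_eq_iff by blast
qed

lemma pbinom_degree_lc:
  "degree (pbinom [:c,1:] m) = m \<and> lead_coeff (pbinom [:c,1:] m) = 1 / fact m"
proof -
  have fac: "[:c,1:] - [:of_nat k:] = [:c - of_nat k, 1:]" for k by simp
  have nz: "(\<Prod>k<m. [:c - of_nat k, 1:]) \<noteq> 0" by (simp add: prod_zero_iff)
  have d: "degree (\<Prod>k<m. [:c - of_nat k, 1:]) = m"
    by (subst degree_prod_eq_sum_degree) auto
  have l: "lead_coeff (\<Prod>k<m. [:c - of_nat k, 1:]) = 1"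
    by (simp add: lead_coeff_prod)
  show ?thesis unfolding pbinom_def fac using d l by simp
qed



definition Pset :: "nat \<Rightarrow> (nat \<times> nat) set" where "Pset n = {(i,j). i < j \<and> j < n}"

lemma Pset_eq: "Pset n = (\<lambda>x. (snd x, fst x)) ` (SIGMA j:{..<n}. {..<j})"
  unfolding Pset_def by (auto simp: image_iff)

lemma finite_Pset[simp]: "finite (Pset n)"
  unfolding Pset_eq by auto

lemma inj_swap_Pset: "inj_on (\<lambda>x. (snd x, fst x)) A"
  by (auto simp: inj_on_def)

lemma prod_Pset: "(\<Prod>p\<in>Pset n. h p) = (\<Prod>j<n. \<Prod>i<j. h (i,j))"
  unfolding Pset_eq prod.reindex[OF inj_swap_Pset] by (simp add: prod.Sigma split_def)

lemma sum_Pset: "(\<Sum>p\<in>Pset n. h p) = (\<Sum>j<n. \<Sum>i<j. h (i,j))"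
  unfolding Pset_eq sum.reindex[OF inj_swap_Pset] by (simp add: sum.Sigma split_def)

definition Eg :: "nat \<Rightarrow> ((nat \<times> nat) \<Rightarrow> (nat \<times> nat)) \<Rightarrow> (nat \<Rightarrow>\<^sub>0 nat)" where
  "Eg n g = (\<Sum>p\<in>Pset n. ex3 p (g p))"

lemma Qpoly_exp: "Qpoly n = (\<Sum>g\<in>PiE (Pset n) (\<lambda>_. C3).
    Poly_Mapping.single (Eg n g) (\<Prod>p\<in>Pset n. cf3 (g p)))"
proof -
  have "Qpoly n = (\<Prod>p\<in>Pset n. \<Sum>c\<in>C3. Poly_Mapping.single (ex3 p c) (cf3 c))"
    unfolding Qpoly_def Pset_def by (intro prod.cong refl) (auto simp: factor_expand)
  also have "\<dots> = (\<Sum>g\<in>PiE (Pset n) (\<lambda>_. C3). Poly_Mapping.single (Eg n g) (\<Prod>p\<in>Pset n. cf3 (g p)))"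
    unfolding Eg_def by (rule expand_prod) (auto simp: C3_def)
  finally show ?thesis .
qed

definition wt :: "nat list \<Rightarrow> (nat \<Rightarrow>\<^sub>0 nat) \<Rightarrow> rat poly poly" where
  "wt a e = (if (\<forall>i\<ge>length a. Poly_Mapping.lookup e i = 0) then
           (\<Prod>i<length a. if Poly_Mapping.lookup e i \<le> a ! i - 1
                     then ser_coeff (a ! i - 1 - Poly_Mapping.lookup e i) else 0)
         else 0)"

lemma Phi_Lf: "Phi a = Lf (wt a) (Qpoly (length a))"
  unfolding Phi_def Lf_def wt_def Let_def by (intro sum.cong refl) auto

lemma lookup_ex3:
  "Poly_Mapping.lookup (ex3 (i,j) c) k =
     (if fst c = 0 then (if k = j then 1 else 0) else (if k = i then 1 else 0))
     + (if snd c = 0 then 0 else if snd c = 1 then (if k = j then 1 else 0)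
        else (if k = i then 1 else 0) + (if k = j then 1 else 0))"
  by (simp add: ex3_def lookup_add lookup_single when_def)

lemma lookup_Eg_out: "k \<ge> n \<Longrightarrow> Poly_Mapping.lookup (Eg n g) k = 0"
  unfolding Eg_def lookup_sum by (intro sum.neutral) (auto simp: Pset_def lookup_ex3)

definition tdeg :: "nat \<Rightarrow> (nat \<Rightarrow>\<^sub>0 nat) \<Rightarrow> nat" where
  "tdeg n e = (\<Sum>k<n. Poly_Mapping.lookup e k)"

lemma tdeg_ex3: assumes "i < j" "j < n" "snd c \<le> 2"
  shows "tdeg n (ex3 (i,j) c) = 1 + snd c"
proof -
  have "tdeg n (ex3 (i,j) c) = (\<Sum>k<n. (if fst c = 0 then (if k = j then 1 else 0) else (if k = i then 1 else 0))
     + (if snd c = 0 then 0 else if snd c = 1 then (if k = j then 1 else 0)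
        else (if k = i then 1 else 0) + (if k = j then 1 else 0)))"
    unfolding tdeg_def lookup_ex3 ..
  also have "\<dots> = 1 + snd c" using assms
    by (cases "fst c = 0"; cases "snd c = 0"; cases "snd c = 1") (simp_all add: sum.distrib)
  finally show ?thesis .
qed

lemma tdeg_Eg: assumes "g \<in> PiE (Pset n) (\<lambda>_. C3)"
  shows "tdeg n (Eg n g) = (\<Sum>p\<in>Pset n. 1 + snd (g p))"
proof -
  have "tdeg n (Eg n g) = (\<Sum>p\<in>Pset n. tdeg n (ex3 p (g p)))"
    unfolding tdeg_def Eg_def lookup_sum by (rule sum.swap)
  also have "\<dots> = (\<Sum>p\<in>Pset n. 1 + snd (g p))"
  proof (intro sum.cong refl)
    fix p assume p: "p \<in> Pset n"
    then obtain i j where "p = (i,j)" "i < j" "j < n" by (auto simp: Pset_def)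
    moreover have "snd (g p) \<le> 2" using PiE_mem[OF assms p] by (auto simp: C3_def)
    ultimately show "tdeg n (ex3 p (g p)) = 1 + snd (g p)" using tdeg_ex3 by simp
  qed
  finally show ?thesis .
qed



definition sg :: "nat \<Rightarrow> ((nat \<times> nat) \<Rightarrow> (nat \<times> nat)) \<Rightarrow> rat poly" where
  "sg n g = (\<Prod>p\<in>Pset n. if fst (g p) = 0 then 1 else -1)"
definition nt :: "nat \<Rightarrow> ((nat \<times> nat) \<Rightarrow> (nat \<times> nat)) \<Rightarrow> nat" where
  "nt n g = (\<Sum>p\<in>Pset n. if snd (g p) = 1 then 1 else 0)"
definition nu :: "nat \<Rightarrow> ((nat \<times> nat) \<Rightarrow> (nat \<times> nat)) \<Rightarrow> nat" where
  "nu n g = (\<Sum>p\<in>Pset n. if snd (g p) = 2 then 1 else 0)"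
definition valid :: "nat list \<Rightarrow> ((nat \<times> nat) \<Rightarrow> (nat \<times> nat)) \<Rightarrow> bool" where
  "valid a g = (\<forall>k<length a. Poly_Mapping.lookup (Eg (length a) g) k \<le> a ! k - 1)"
definition PB :: "nat list \<Rightarrow> ((nat \<times> nat) \<Rightarrow> (nat \<times> nat)) \<Rightarrow> rat poly" where
  "PB a g = (\<Prod>k<length a. pbinom [:0,1:] (a ! k - 1 - Poly_Mapping.lookup (Eg (length a) g) k))"

lemma const_prod: "(\<Prod>x\<in>A. [:f x:]) = [:\<Prod>x\<in>A. f x:]"
  by (induction A rule: infinite_finite_induct) (auto simp: one_pCons ac_simps)

lemma smult_prod: "(\<Prod>i\<in>A. Polynomial.smult (c i) (p i)) = Polynomial.smult (\<Prod>i\<in>A. c i) (\<Prod>i\<in>A. p i)"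
  by (induction A rule: infinite_finite_induct) (auto simp: ac_simps)

lemma cf3_alt: "cf3 c = [:if fst c = 0 then 1 else -1:] * tau ^ (if snd c = 1 then 1 else 0)"
  by (simp add: cf3_def one_pCons)

lemma cf3_prod: "(\<Prod>p\<in>Pset n. cf3 (g p)) = [:sg n g:] * tau ^ nt n g"
  unfolding cf3_alt prod.distrib const_prod sg_def nt_def power_sum
  by (simp add: if_distrib[where f="\<lambda>x. [:x:]"] cong: if_cong)

lemma wt_invalid: "\<not> valid a g \<Longrightarrow> wt a (Eg (length a) g) = 0"
  unfolding wt_def valid_def by (auto intro!: prod_zero)

lemma wt_valid: "valid a g \<Longrightarrow> wt a (Eg (length a) g) =
   [:PB a g:] * tau ^ (\<Sum>k<length a. a ! k - 1 - Poly_Mapping.lookup (Eg (length a) g) k)"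
  unfolding wt_def valid_def PB_def
  by (simp add: lookup_Eg_out ser_coeff_def prod.distrib const_prod power_sum smult_prod)

lemma tdeg_Eg': assumes "g \<in> PiE (Pset n) (\<lambda>_. C3)"
  shows "tdeg n (Eg n g) = card (Pset n) + nt n g + 2 * nu n g"
proof -
  have "tdeg n (Eg n g) = (\<Sum>p\<in>Pset n. 1 + ((if snd (g p) = 1 then 1 else 0) + 2 * (if snd (g p) = 2 then 1 else 0)))"
    unfolding tdeg_Eg[OF assms]
  proof (intro sum.cong refl)
    fix p assume "p \<in> Pset n"
    then have "g p \<in> C3" using PiE_mem[OF assms] by blast
    then show "1 + snd (g p) = 1 + ((if snd (g p) = 1 then 1 else 0) + 2 * (if snd (g p) = 2 then 1 else 0))"
      by (auto simp: C3_def)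
  qed
  then show ?thesis by (simp add: sum.distrib nt_def nu_def sum_distrib_left sum_Suc)
qed

lemma dstat_alt: assumes "\<forall>k<length a. k + 1 \<le> a ! k"
  shows "dstat a = (\<Sum>k<length a. a ! k - 1) - card (Pset (length a))"
proof -
  have "card (Pset (length a)) = (\<Sum>k<length a. k)" using sum_Pset[of "\<lambda>_. 1::nat" "length a"] by simp
  moreover have "(\<Sum>k<length a. a ! k - 1 - k) = (\<Sum>k<length a. a ! k - 1) - (\<Sum>k<length a. k)"
    using assms by (intro sum_subtractf_nat) auto
  moreover have "(\<Sum>k<length a. a ! k - 1 - k) = dstat a"
    unfolding dstat_def by (intro sum.cong refl) auto
  ultimately show ?thesis by simp
qed

lemma term_eq:
  assumes ha: "\<forall>k<length a. k + 1 \<le> a ! k" and g: "g \<in> PiE (Pset (length a)) (\<lambda>_. C3)"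
  shows "(\<Prod>p\<in>Pset (length a). cf3 (g p)) * wt a (Eg (length a) g)
      = (if valid a g then monom (sg (length a) g * PB a g) (dstat a - 2 * nu (length a) g) else 0)
     \<and> (valid a g \<longrightarrow> 2 * nu (length a) g \<le> dstat a)"
proof (cases "valid a g")
  case False then show ?thesis by (simp add: wt_invalid)
next
  case True
  let ?n = "length a"
  let ?e = "Eg ?n g"
  let ?S = "\<Sum>k<?n. a ! k - 1"
  have le: "tdeg ?n ?e \<le> ?S" unfolding tdeg_def
    using True unfolding valid_def by (intro sum_mono) auto
  have ex: "(\<Sum>k<?n. a ! k - 1 - Poly_Mapping.lookup ?e k) = ?S - tdeg ?n ?e"
    unfolding tdeg_def using True unfolding valid_def by (intro sum_subtractf_nat) auto
  have td: "tdeg ?n ?e = card (Pset ?n) + nt ?n g + 2 * nu ?n g" by (rule tdeg_Eg'[OF g])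
  have ds: "dstat a = ?S - card (Pset ?n)" by (rule dstat_alt[OF ha])
  have expo: "nt ?n g + (?S - tdeg ?n ?e) = dstat a - 2 * nu ?n g" and bnd: "2 * nu ?n g \<le> dstat a"
    using le td ds by linarith+
  have "(\<Prod>p\<in>Pset ?n. cf3 (g p)) * wt a ?e = [:sg ?n g:] * tau ^ nt ?n g * ([:PB a g:] * tau ^ (?S - tdeg ?n ?e))"
    unfolding cf3_prod wt_valid[OF True] ex ..
  also have "\<dots> = monom (sg ?n g * PB a g) (nt ?n g + (?S - tdeg ?n ?e))"
    by (simp add: monom_altdef tau_def power_add algebra_simps)
  finally show ?thesis using True expo bnd by simp
qed



definition C2 :: "(nat \<times> nat) set" where "C2 = {0,1} \<times> {0,1}"

lemma Phi_sum: assumes ha: "\<forall>k<length a. k + 1 \<le> a ! k"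
  shows "Phi a = (\<Sum>g\<in>PiE (Pset (length a)) (\<lambda>_. C3).
     if valid a g then monom (sg (length a) g * PB a g) (dstat a - 2 * nu (length a) g) else 0)"
  unfolding Phi_Lf Qpoly_exp Lf_sum Lf_single
  by (intro sum.cong refl) (use term_eq[OF ha] in blast)

lemma coeff_Phi: assumes ha: "\<forall>k<length a. k + 1 \<le> a ! k"
  shows "coeff (Phi a) m = (\<Sum>g\<in>PiE (Pset (length a)) (\<lambda>_. C3).
     if valid a g \<and> m = dstat a - 2 * nu (length a) g then sg (length a) g * PB a g else 0)"
  unfolding Phi_sum[OF ha] coeff_sum
  by (intro sum.cong refl) (auto simp: coeff_monom)

lemma degree_Phi_le: assumes ha: "\<forall>k<length a. k + 1 \<le> a ! k"
  shows "degree (Phi a) \<le> dstat a"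
  by (rule degree_le) (auto simp: coeff_Phi[OF ha] intro!: sum.neutral)

lemma nu_zero_iff: "nu n g = 0 \<longleftrightarrow> (\<forall>p\<in>Pset n. snd (g p) \<noteq> 2)"
  unfolding nu_def by (subst sum_eq_0_iff) auto

definition Ttop :: "nat list \<Rightarrow> rat poly" where
  "Ttop a = (\<Sum>g\<in>PiE (Pset (length a)) (\<lambda>_. C2). if valid a g then sg (length a) g * PB a g else 0)"

lemma coeff_Phi_top: assumes ha: "\<forall>k<length a. k + 1 \<le> a ! k"
  shows "coeff (Phi a) (dstat a) = Ttop a"
proof -
  let ?n = "length a"
  have "coeff (Phi a) (dstat a) = (\<Sum>g\<in>PiE (Pset ?n) (\<lambda>_. C3).
     if valid a g \<and> nu ?n g = 0 then sg ?n g * PB a g else 0)"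
    unfolding coeff_Phi[OF ha]
  proof (intro sum.cong refl)
    fix g assume g: "g \<in> PiE (Pset ?n) (\<lambda>_. C3)"
    have "valid a g \<longrightarrow> 2 * nu ?n g \<le> dstat a" using term_eq[OF ha g] by blast
    then show "(if valid a g \<and> dstat a = dstat a - 2 * nu ?n g then sg ?n g * PB a g else 0) =
          (if valid a g \<and> nu ?n g = 0 then sg ?n g * PB a g else 0)"
      by auto
  qed
  also have "\<dots> = Ttop a"
  proof -
    have fin: "finite (PiE (Pset ?n) (\<lambda>_. C3))" by (auto simp: C3_def intro!: finite_PiE)
    have sub: "PiE (Pset ?n) (\<lambda>_. C2) \<subseteq> PiE (Pset ?n) (\<lambda>_. C3)"
      by (rule PiE_mono) (auto simp: C2_def C3_def)
    have z: "\<forall>g\<in>PiE (Pset ?n) (\<lambda>_. C3) - PiE (Pset ?n) (\<lambda>_. C2).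
        (if valid a g \<and> nu ?n g = 0 then sg ?n g * PB a g else 0) = 0"
    proof
      fix g assume "g \<in> PiE (Pset ?n) (\<lambda>_. C3) - PiE (Pset ?n) (\<lambda>_. C2)"
      then obtain p where "p \<in> Pset ?n" "g p \<in> C3" "g p \<notin> C2"
        by (auto simp: PiE_iff)
      then have "nu ?n g \<noteq> 0" unfolding nu_zero_iff by (auto simp: C2_def C3_def) (metis snd_conv)+
      then show "(if valid a g \<and> nu ?n g = 0 then sg ?n g * PB a g else 0) = 0" by simp
    qed
    have e: "(if valid a g \<and> nu ?n g = 0 then sg ?n g * PB a g else 0) = (if valid a g then sg ?n g * PB a g else 0)"
      if "g \<in> PiE (Pset ?n) (\<lambda>_. C2)" for g
    proof -
      have "nu ?n g = 0" using that unfolding nu_zero_iff by (auto simp: C2_def PiE_iff)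
      then show ?thesis by simp
    qed
    show ?thesis unfolding Ttop_def by (rule sum.mono_neutral_cong_right[OF fin sub z e])
  qed
  finally show ?thesis .
qed



definition w2 :: "nat list \<Rightarrow> (nat \<Rightarrow>\<^sub>0 nat) \<Rightarrow> rat poly poly" where
  "w2 a e = (if (\<forall>i\<ge>length a. Poly_Mapping.lookup e i = 0) \<and> (\<forall>i<length a. Poly_Mapping.lookup e i \<le> a ! i - 1)
     then [:\<Prod>i<length a. pbinom [:0,1:] (a ! i - 1 - Poly_Mapping.lookup e i):] else 0)"

definition Q2 :: "nat \<Rightarrow> upoly" where
  "Q2 n = (\<Prod>p\<in>Pset n. (uvar (snd p) - uvar (fst p)) * (1 + uvar (snd p)))"

definition cf2 :: "nat \<times> nat \<Rightarrow> rat poly poly" where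
  "cf2 c = (if fst c = 0 then 1 else -1)"

lemma cf2_alt: "cf2 c = [:if fst c = 0 then 1 else -1:]"
  by (simp add: cf2_def one_pCons)

lemma factor2_expand:
  "(uvar j - uvar i) * (1 + uvar j) = (\<Sum>c\<in>C2. Poly_Mapping.single (ex3 (i,j) c) (cf2 c))"
  unfolding C2_def
  by (simp add: uvar_def ex3_def cf2_def algebra_simps mult_single single_uminus)

lemma const_sum: "(\<Sum>x\<in>A. [:f x:]) = [:\<Sum>x\<in>A. f x:]"
  by (induction A rule: infinite_finite_induct) auto

lemma Q2_exp: "Q2 n = (\<Sum>g\<in>PiE (Pset n) (\<lambda>_. C2). Poly_Mapping.single (Eg n g) [:sg n g:])"
proof -
  have "Q2 n = (\<Prod>p\<in>Pset n. \<Sum>c\<in>C2. Poly_Mapping.single (ex3 p c) (cf2 c))"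
    unfolding Q2_def by (intro prod.cong refl) (auto simp: factor2_expand)
  also have "\<dots> = (\<Sum>g\<in>PiE (Pset n) (\<lambda>_. C2). Poly_Mapping.single (Eg n g) (\<Prod>p\<in>Pset n. cf2 (g p)))"
    unfolding Eg_def by (rule expand_prod) (auto simp: C2_def)
  also have "\<dots> = (\<Sum>g\<in>PiE (Pset n) (\<lambda>_. C2). Poly_Mapping.single (Eg n g) [:sg n g:])"
    unfolding cf2_alt const_prod sg_def ..
  finally show ?thesis .
qed

lemma Lf_Q2: "Lf (w2 a) (Q2 (length a)) = [:Ttop a:]"
proof -
  have "Lf (w2 a) (Q2 (length a)) = (\<Sum>g\<in>PiE (Pset (length a)) (\<lambda>_. C2). [:sg (length a) g:] * w2 a (Eg (length a) g))"
    unfolding Q2_exp Lf_sum Lf_single ..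
  also have "\<dots> = (\<Sum>g\<in>PiE (Pset (length a)) (\<lambda>_. C2). [:if valid a g then sg (length a) g * PB a g else 0:])"
    by (intro sum.cong refl) (auto simp: w2_def valid_def PB_def lookup_Eg_out)
  also have "\<dots> = [:Ttop a:]" unfolding const_sum Ttop_def ..
  finally show ?thesis .
qed

lemma uvar_pow: "uvar i ^ m = Poly_Mapping.single (Poly_Mapping.single i m) 1"
proof (induction m)
  case 0 then show ?case by simp
next
  case (Suc m)
  then show ?case by (simp add: uvar_def mult_single single_add[symmetric])
qed

lemma G_expand: "uvar i ^ m * (1 + uvar i) ^ i =
   (\<Sum>k\<in>{..i}. Poly_Mapping.single (Poly_Mapping.single i (m + k)) (of_nat (i choose k)))"
proof -
  have "(1 + uvar i) ^ i = (\<Sum>k\<le>i. of_nat (i choose k) * uvar i ^ k * 1 ^ (i - k))"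
    using binomial_ring[of "uvar i" 1 i] by (simp add: add.commute)
  then show ?thesis
    by (simp add: sum_distrib_left uvar_pow mult_single single_of_nat[symmetric] single_add[symmetric] del: single_of_nat)
qed



lemma prod_if_zero: fixes f :: "'b \<Rightarrow> 'a::comm_semiring_1" shows "finite A \<Longrightarrow> (\<Prod>i\<in>A. if Q i then f i else 0) = (if \<forall>i\<in>A. Q i then \<Prod>i\<in>A. f i else 0)"
  by (induction A rule: finite_induct) auto

lemma lookup_sum_single: fixes n :: nat and m :: "nat \<Rightarrow> nat" shows "Poly_Mapping.lookup (\<Sum>i<n. Poly_Mapping.single i (m i)) k = (if k < n then m k else 0)"
proof -
  have "Poly_Mapping.lookup (\<Sum>i<n. Poly_Mapping.single i (m i)) k = (\<Sum>i<n. if i = k then m i else 0)"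
    by (simp add: lookup_sum lookup_single when_def)
  also have "\<dots> = (if k < n then m k else 0)"
    by (subst sum.delta) auto
  finally show ?thesis .
qed

lemma cv_tbinom: assumes "1 \<le> A"
  shows "(\<Sum>k\<le>i. of_nat (i choose k) * (if s + k \<le> A - 1 then pbinom [:0,1:] (A - 1 - (s + k)) else 0))
     = tbinom i (int A - int s - 1)"
proof (cases "s \<le> A - 1")
  case True
  define L where "L = A - 1 - s"
  have "(\<Sum>k\<le>i. of_nat (i choose k) * (if s + k \<le> A - 1 then pbinom [:0,1:] (A - 1 - (s + k)) else 0))
      = (\<Sum>k\<le>i. of_nat (i choose k) * (if k \<le> L then pbinom [:0,1:] (L - k) else 0))"
    using True by (intro sum.cong refl) (auto simp: L_def)
  also have "\<dots> = pbinom [:of_nat i, 1:] L" by (rule cv_pbinom)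
  also have "\<dots> = tbinom i (int A - int s - 1)"
    using True assms by (simp add: tbinom_def L_def nat_diff_distrib' of_nat_diff)
  finally show ?thesis .
next
  case False
  then show ?thesis using assms by (simp add: tbinom_def)
qed

lemma Lf_G: assumes ha: "\<forall>k<length a. 1 \<le> a ! k"
  shows "Lf (w2 a) (\<Prod>i<length a. uvar i ^ \<sigma> i * (1 + uvar i) ^ i)
     = [:\<Prod>i<length a. tbinom i (int (a ! i) - int (\<sigma> i) - 1):]"
proof -
  let ?n = "length a"
  define F where "F i k = of_nat (i choose k) * (if \<sigma> i + k \<le> a ! i - 1 then pbinom [:0,1:] (a ! i - 1 - (\<sigma> i + k)) else 0)" for i k
  have "(\<Prod>i<?n. uvar i ^ \<sigma> i * (1 + uvar i) ^ i)
     = (\<Prod>i\<in>{..<?n}. \<Sum>k\<in>{..i}. Poly_Mapping.single (Poly_Mapping.single i (\<sigma> i + k)) (of_nat (i choose k)))"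
    by (simp add: G_expand)
  also have "\<dots> = (\<Sum>h\<in>PiE {..<?n} (\<lambda>i. {..i}). Poly_Mapping.single (\<Sum>i<?n. Poly_Mapping.single i (\<sigma> i + h i)) (\<Prod>i<?n. of_nat (i choose h i)))"
    by (rule expand_prod) auto
  finally have eq: "(\<Prod>i<?n. uvar i ^ \<sigma> i * (1 + uvar i) ^ i) = \<dots>" .
  have "Lf (w2 a) (\<Prod>i<?n. uvar i ^ \<sigma> i * (1 + uvar i) ^ i)
     = (\<Sum>h\<in>PiE {..<?n} (\<lambda>i. {..i}). (\<Prod>i<?n. of_nat (i choose h i)) * w2 a (\<Sum>i<?n. Poly_Mapping.single i (\<sigma> i + h i)))"
    unfolding eq Lf_sum Lf_single ..
  also have "\<dots> = (\<Sum>h\<in>PiE {..<?n} (\<lambda>i. {..i}). [:\<Prod>i<?n. F i (h i):])"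
  proof (intro sum.cong refl)
    fix h
    have w: "w2 a (\<Sum>i<?n. Poly_Mapping.single i (\<sigma> i + h i)) =
       (if \<forall>i<?n. \<sigma> i + h i \<le> a ! i - 1 then [:\<Prod>i<?n. pbinom [:0,1:] (a ! i - 1 - (\<sigma> i + h i)):] else 0)"
      unfolding w2_def lookup_sum_single by auto
    show "(\<Prod>i<?n. of_nat (i choose h i)) * w2 a (\<Sum>i<?n. Poly_Mapping.single i (\<sigma> i + h i)) = [:\<Prod>i<?n. F i (h i):]"
    proof (cases "\<forall>i<?n. \<sigma> i + h i \<le> a ! i - 1")
      case True
      have "(\<Prod>i<?n. F i (h i)) = (\<Prod>i<?n. of_nat (i choose h i)) * (\<Prod>i<?n. pbinom [:0,1:] (a ! i - 1 - (\<sigma> i + h i)))"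
        using True unfolding F_def prod.distrib by (intro arg_cong2[where f="(*)"] refl prod.cong) auto
      then show ?thesis unfolding w using True by (simp add: of_nat_poly[where 'a="rat poly"] const_prod)
    next
      case False
      then obtain i where "i < ?n" "\<not> \<sigma> i + h i \<le> a ! i - 1" by auto
      then have "(\<Prod>i<?n. F i (h i)) = 0" unfolding F_def by (intro prod_zero) auto
      then show ?thesis unfolding w if_not_P[OF False] by simp
    qed
  qed
  also have "\<dots> = [:\<Prod>i<?n. \<Sum>k\<le>i. F i k:]"
    unfolding const_sum by (subst prod_sum_PiE) auto
  also have "\<dots> = [:\<Prod>i<?n. tbinom i (int (a ! i) - int (\<sigma> i) - 1):]"
    unfolding F_def by (intro arg_cong[where f="\<lambda>x. [:x:]"] prod.cong refl cv_tbinom) (use ha in auto)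
  finally show ?thesis .
qed



lemma perm_lt: fixes \<sigma> :: "nat \<Rightarrow> nat" shows "\<sigma> permutes {0..<n} \<Longrightarrow> i < n \<Longrightarrow> \<sigma> i < n"
  using permutes_in_image[of \<sigma> "{0..<n}" i] by auto

lemma Q2_perm: "Q2 n = (\<Sum>\<sigma>\<in>{\<sigma>. \<sigma> permutes {0..<n}}. signof \<sigma> * (\<Prod>i<n. uvar i ^ \<sigma> i * (1 + uvar i) ^ i))"
proof -
  have A: "(\<Prod>p\<in>Pset n. uvar (snd p) - uvar (fst p)) = (\<Sum>\<sigma>\<in>{\<sigma>. \<sigma> permutes {0..<n}}. signof \<sigma> * (\<Prod>i<n. uvar i ^ \<sigma> i))"
  proof -
    have "(\<Prod>p\<in>Pset n. uvar (snd p) - uvar (fst p)) = det (mat n n (\<lambda>(i,j). uvar i ^ j))"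
      unfolding prod_Pset vandermonde_det by simp
    also have "\<dots> = (\<Sum>\<sigma>\<in>{\<sigma>. \<sigma> permutes {0..<n}}. signof \<sigma> * (\<Prod>i<n. uvar i ^ \<sigma> i))"
      by (subst det_def'[of _ n]) (auto intro!: sum.cong prod.cong simp: atLeast0LessThan perm_lt)
    finally show ?thesis .
  qed
  have B: "(\<Prod>p\<in>Pset n. 1 + uvar (snd p)) = (\<Prod>i<n. (1 + uvar i) ^ i)"
    unfolding prod_Pset by simp
  show ?thesis unfolding Q2_def prod.distrib A B sum_distrib_right
    by (intro sum.cong refl) (simp add: prod.distrib mult.assoc)
qed

lemma Ttop_det: assumes ha: "\<forall>k<length a. 1 \<le> a ! k"
  shows "Ttop a = det (Dmat a)"
proof -
  let ?n = "length a"
  let ?P = "{\<sigma>. \<sigma> permutes {0..<?n}}"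
  have "[:Ttop a:] = Lf (w2 a) (Q2 ?n)" by (simp add: Lf_Q2)
  also have "\<dots> = (\<Sum>\<sigma>\<in>?P. of_int (sign \<sigma>) * Lf (w2 a) (\<Prod>i<?n. uvar i ^ \<sigma> i * (1 + uvar i) ^ i))"
    unfolding Q2_perm Lf_sum
    by (intro sum.cong refl) (simp add: Lf_scale single_of_int[symmetric] del: single_of_int)
  also have "\<dots> = (\<Sum>\<sigma>\<in>?P. [:of_int (sign \<sigma>) * (\<Prod>i<?n. tbinom i (int (a ! i) - int (\<sigma> i) - 1)):])"
    by (intro sum.cong refl) (simp add: Lf_G[OF ha] of_int_poly[where 'a="rat poly"])
  also have "\<dots> = [:det (Dmat a):]"
    unfolding const_sum
    by (subst det_def'[of _ ?n]) (auto simp: Dmat_def atLeast0LessThan perm_lt intro!: sum.cong prod.cong arg_cong[where f="\<lambda>x. [:x:]"])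
  finally show ?thesis by simp
qed



definition Pf :: "nat \<Rightarrow> rat poly" where "Pf j = (\<Prod>k<j. [:- of_nat k, 1:])"

lemma Pf_deg: "degree (Pf j) = j \<and> lead_coeff (Pf j) = 1"
proof -
  have "degree (Pf j) = j" unfolding Pf_def by (subst degree_prod_eq_sum_degree) auto
  moreover have "lead_coeff (Pf j) = 1" unfolding Pf_def by (simp add: lead_coeff_prod)
  ultimately show ?thesis by simp
qed

lemma Pf_lc: "coeff (Pf j) j = 1"
  using Pf_deg[of j] by metis

lemma poly_Pf: "poly (Pf j) (of_nat b) = fact j * of_nat (b choose j)"
  by (simp add: Pf_def poly_prod binomial_gbinomial gbinomial_mult_fact atLeast0LessThan)

lemma gen_vandermonde:
  fixes x :: "nat \<Rightarrow> rat"
  shows "det (mat n n (\<lambda>(i,j). poly (Pf j) (x i))) = (\<Prod>j<n. \<Prod>i<j. (x j - x i))"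
proof -
  define X where "X = mat n n (\<lambda>(i,j). x i ^ j)"
  define U where "U = mat n n (\<lambda>(k,j). coeff (Pf j) k)"
  have X: "X \<in> carrier_mat n n" and U: "U \<in> carrier_mat n n" unfolding X_def U_def by auto
  have "mat n n (\<lambda>(i,j). poly (Pf j) (x i)) = X * U"
  proof (rule eq_matI)
    fix i j assume ij: "i < dim_row (X * U)" "j < dim_col (X * U)"
    then have i: "i < n" and j: "j < n" using X U by auto
    have "(X * U) $$ (i,j) = (\<Sum>k\<in>{0..<n}. x i ^ k * coeff (Pf j) k)"
      using i j X U by (simp add: scalar_prod_def X_def U_def)
    also have "\<dots> = (\<Sum>k\<le>degree (Pf j). coeff (Pf j) k * x i ^ k)"
      by (rule sum.mono_neutral_cong_right) (use Pf_deg[of j] j in \<open>auto simp: coeff_eq_0\<close>)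
    also have "\<dots> = poly (Pf j) (x i)" by (simp add: poly_altdef)
    finally have "(X * U) $$ (i,j) = poly (Pf j) (x i)" .
    then show "mat n n (\<lambda>(i,j). poly (Pf j) (x i)) $$ (i,j) = (X * U) $$ (i,j)" using i j by simp
  qed (use X U in auto)
  then have "det (mat n n (\<lambda>(i,j). poly (Pf j) (x i))) = det X * det U"
    using det_mult[OF X U] by simp
  moreover have "det U = 1"
  proof -
    have "upper_triangular U" unfolding U_def upper_triangular_def
      using Pf_deg by (auto intro!: coeff_eq_0)
    then have "det U = prod_list (diag_mat U)" using det_upper_triangular U by blast
    also have "\<dots> = 1" unfolding prod_list_diag_prod by (simp add: U_def Pf_lc)
    finally show ?thesis .
  qed
  ultimately show ?thesis unfolding X_def by (simp add: vandermonde_det)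
qed



definition cc :: "nat \<Rightarrow> nat \<Rightarrow> rat" where
  "cc b j = of_nat (b choose j) * fact j / fact b"

lemma cc_le: "j \<le> b \<Longrightarrow> cc b j = 1 / fact (b - j)"
  by (simp add: cc_def binomial_fact field_simps)

lemma cc_gt: "\<not> j \<le> b \<Longrightarrow> cc b j = 0"
  by (simp add: cc_def)

lemma card_Pset: "card (Pset n) = (\<Sum>k<n. k)"
  using sum_Pset[of "\<lambda>_. 1::nat" n] by simp

lemma sum_perm: fixes \<sigma> :: "nat \<Rightarrow> nat" assumes "\<sigma> permutes {0..<n}"
  shows "(\<Sum>i<n. \<sigma> i) = (\<Sum>i<n. i)"
  using sum.reindex_bij_betw[OF permutes_imp_bij[OF assms], of "\<lambda>i. i"]
  by (simp add: atLeast0LessThan)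

lemma pbinom_lc: "coeff (pbinom [:c,1:] m) m = 1 / fact m"
  using pbinom_degree_lc[of c m] by metis

lemma pbinom_nz: "pbinom [:c,1:] m \<noteq> 0"
proof
  assume "pbinom [:c,1:] m = 0"
  then have "coeff (pbinom [:c,1:] m) m = 0" by simp
  then show False by (simp add: pbinom_lc)
qed

lemma coeff_prod_tb:
  assumes ha: "\<forall>k<length a. k + 1 \<le> a ! k" and \<sigma>: "\<sigma> permutes {0..<length a}"
  shows "coeff (\<Prod>i<length a. tbinom i (int (a ! i) - int (\<sigma> i) - 1)) (dstat a)
       = (\<Prod>i<length a. cc (a ! i - 1) (\<sigma> i))"
proof (cases "\<forall>i<length a. \<sigma> i \<le> a ! i - 1")
  case False
  then obtain i where i: "i < length a" "\<not> \<sigma> i \<le> a ! i - 1" by auto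
  have z1: "(\<Prod>i<length a. tbinom i (int (a ! i) - int (\<sigma> i) - 1)) = 0"
    using i by (intro prod_zero) (auto intro!: bexI[of _ i] simp: tbinom_def)
  have z2: "(\<Prod>i<length a. cc (a ! i - 1) (\<sigma> i)) = 0"
    using i by (intro prod_zero) (auto intro!: bexI[of _ i] simp: cc_gt)
  show ?thesis unfolding z1 z2 by simp
next
  case True
  let ?n = "length a"
  define m where "m i = a ! i - 1 - \<sigma> i" for i
  have tb: "tbinom i (int (a ! i) - int (\<sigma> i) - 1) = pbinom [:of_nat i, 1:] (m i)" if "i < ?n" for i
  proof -
    have "int (a ! i) - int (\<sigma> i) - 1 = int (m i)" using True that ha unfolding m_def by fastforce
    then show ?thesis by (simp add: tbinom_def)
  qed
  have P: "(\<Prod>i<?n. tbinom i (int (a ! i) - int (\<sigma> i) - 1)) = (\<Prod>i<?n. pbinom [:of_nat i, 1:] (m i))"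
    by (intro prod.cong refl) (simp add: tb)
  have deg: "degree (\<Prod>i<?n. pbinom [:of_nat i, 1:] (m i)) = (\<Sum>i<?n. m i)"
    by (subst degree_prod_eq_sum_degree) (auto simp: pbinom_nz pbinom_degree_lc)
  have "(\<Sum>i<?n. m i) = (\<Sum>i<?n. a ! i - 1) - (\<Sum>i<?n. \<sigma> i)"
    unfolding m_def using True by (intro sum_subtractf_nat) auto
  also have "\<dots> = dstat a" using dstat_alt[OF ha] sum_perm[OF \<sigma>] card_Pset by simp
  finally have deg': "degree (\<Prod>i<?n. pbinom [:of_nat i, 1:] (m i)) = dstat a" using deg by simp
  have "coeff (\<Prod>i<?n. tbinom i (int (a ! i) - int (\<sigma> i) - 1)) (dstat a)
       = lead_coeff (\<Prod>i<?n. pbinom [:of_nat i, 1:] (m i))" unfolding P deg' ..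
  also have "\<dots> = (\<Prod>i<?n. 1 / fact (m i))"
    by (simp add: lead_coeff_prod pbinom_degree_lc pbinom_lc)
  also have "\<dots> = (\<Prod>i<?n. cc (a ! i - 1) (\<sigma> i))"
    using True by (intro prod.cong refl) (simp add: cc_le m_def)
  finally show ?thesis .
qed

lemma coeff_det:
  assumes ha: "\<forall>k<length a. k + 1 \<le> a ! k"
  shows "coeff (det (Dmat a)) (dstat a) = det (mat (length a) (length a) (\<lambda>(i,j). cc (a ! i - 1) j))"
proof -
  let ?n = "length a"
  have "det (Dmat a) = (\<Sum>\<sigma>\<in>{\<sigma>. \<sigma> permutes {0..<?n}}. [:of_int (sign \<sigma>):] * (\<Prod>i<?n. tbinom i (int (a ! i) - int (\<sigma> i) - 1)))"
    by (subst det_def'[of _ ?n]) (auto simp: Dmat_def atLeast0LessThan perm_lt of_int_poly intro!: sum.cong prod.cong)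
  then have "coeff (det (Dmat a)) (dstat a) = (\<Sum>\<sigma>\<in>{\<sigma>. \<sigma> permutes {0..<?n}}. of_int (sign \<sigma>) * (\<Prod>i<?n. cc (a ! i - 1) (\<sigma> i)))"
    by (simp add: coeff_sum coeff_prod_tb[OF ha])
  also have "\<dots> = det (mat ?n ?n (\<lambda>(i,j). cc (a ! i - 1) j))"
    by (subst det_def'[of _ ?n]) (auto simp: atLeast0LessThan perm_lt intro!: sum.cong prod.cong)
  finally show ?thesis .
qed

lemma det_nz:
  assumes ha: "\<forall>k<length a. k + 1 \<le> a ! k" and dist: "distinct a"
  shows "det (Dmat a) \<noteq> 0"
proof -
  let ?n = "length a"
  define b where "b i = a ! i - 1" for i
  have cc_poly: "cc (b i) j = (1 / fact (b i)) * poly (Pf j) (of_nat (b i))" for i j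
    by (simp add: cc_def poly_Pf)
  have "coeff (det (Dmat a)) (dstat a) = det (mat ?n ?n (\<lambda>(i,j). (1 / fact (b i)) * poly (Pf j) (of_nat (b i))))"
    unfolding coeff_det[OF ha] b_def[symmetric] cc_poly ..
  also have "\<dots> = (\<Prod>i<?n. 1 / fact (b i)) * det (mat ?n ?n (\<lambda>(i,j). poly (Pf j) ((of_nat \<circ> b) i)))"
    by (subst det_rows_scale) simp
  also have "\<dots> = (\<Prod>i<?n. 1 / fact (b i)) * (\<Prod>j<?n. \<Prod>i<j. (of_nat (b j) - of_nat (b i)))"
    by (simp add: gen_vandermonde)
  also have "\<dots> \<noteq> 0"
  proof -
    have "b j \<noteq> b i" if "i < j" "j < ?n" for i j
    proof
      assume "b j = b i"
      moreover have "i < ?n" using that by simp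
      then have "a ! i \<ge> 1" "a ! j \<ge> 1" using ha that by fastforce+
      ultimately have "a ! j = a ! i" unfolding b_def by simp
      then show False using dist that nth_eq_iff_index_eq by fastforce
    qed
    then show ?thesis by (auto simp: prod_zero_iff)
  qed
  finally show ?thesis by auto
qed



lemma seq_bound:
  fixes xs :: "nat list"
  assumes "sorted xs" "distinct xs" "\<forall>x\<in>set xs. 1 \<le> x"
  shows "\<forall>k<length xs. k + 1 \<le> xs ! k"
proof (intro allI impI)
  fix k assume "k < length xs"
  then show "k + 1 \<le> xs ! k"
  proof (induction k)
    case 0 then show ?case using assms(3) by auto
  next
    case (Suc k)
    have "xs ! k < xs ! Suc k"
      using sorted_wrt_nth_less[of "(<)" xs k "Suc k"] assms(1,2) Suc.prems
      by (simp add: strict_sorted_iff)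
    then show ?case using Suc by simp
  qed
qed

theorem mainTheorem10:
  fixes n :: nat and M :: "(nat \<times> nat) set"
  assumes "noncrossing_matching n M"
  shows "degree (Phi (matching_seq M)) = dstat (matching_seq M)
    \<and> coeff (Phi (matching_seq M)) (dstat (matching_seq M)) = det (Dmat (matching_seq M))"
proof -
  define a where "a = matching_seq M"
  have sub: "fst ` M \<subseteq> {1..2*n}" using assms unfolding noncrossing_matching_def by auto
  then have fin: "finite (fst ` M)" using finite_subset by blast
  have sa: "sorted a" "distinct a" unfolding a_def matching_seq_def by auto
  have "set a = fst ` M" unfolding a_def matching_seq_def using fin by simp
  then have ge1: "\<forall>x\<in>set a. 1 \<le> x" using sub by auto
  have ha: "\<forall>k<length a. k + 1 \<le> a ! k" by (rule seq_bound[OF sa ge1])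
  have ha1: "\<forall>k<length a. 1 \<le> a ! k" using ha by auto
  have top: "coeff (Phi a) (dstat a) = det (Dmat a)"
    using coeff_Phi_top[OF ha] Ttop_det[OF ha1] by simp
  have "det (Dmat a) \<noteq> 0" by (rule det_nz[OF ha sa(2)])
  then have "dstat a \<le> degree (Phi a)" using top le_degree by metis
  moreover have "degree (Phi a) \<le> dstat a" by (rule degree_Phi_le[OF ha])
  ultimately show ?thesis using top unfolding a_def by simp
qed

end
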